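(* Let $n\ge 1$ be an integer and $q\in\mathbb{C}$. The discriminant in $x$ of $K_n(x,q)=(1+x)^{2n}+qx^{n}$ is \[ \Delta_x\big(K_n(x,q)\big)=n^{2n}q^{2n-1}\,(q+2^{2n}). \]
   Context: For a polynomial $P(x)$ of degree $d$ with leading coefficient $a_d$ and roots $x_1,\dots,x_d$ (with multiplicity), its discriminant is $\Delta_x P=a_d^{2d-2}\prod_{1\le i<j\le d}(x_i-x_j)^2$. Here $K_n(x,q)$ is regarded as a monic polynomial of degree $2n$ in $x$. *)

theory Defs
  imports "HOL-Computational_Algebra.Computational_Algebra"
begin

text \<open>Discriminant of a complex polynomial of degree d with leading coefficient a_d
  and roots x_1..x_d (listed with multiplicity):
  a_d^(2d-2) * product over i<j of (x_i - x_j)^2.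
  The list of roots is any enumeration of the root multiset proots p
  (the product is symmetric, so the choice does not matter).\<close>
definition discriminant :: "complex poly \<Rightarrow> complex" where
  "discriminant p =
     (let rs = (SOME rs. mset rs = proots p); d = degree p in
       lead_coeff p ^ (2 * d - 2) *
       (\<Prod>j<length rs. \<Prod>i<j. (rs ! i - rs ! j) ^ 2))"

definition K_poly :: "nat \<Rightarrow> complex \<Rightarrow> complex poly" where
  "K_poly n q = [:1, 1:] ^ (2 * n) + monom q n"

end

theory Submission
  imports Defs
begin

lemma pderiv_roots:
  fixes r :: "nat \<Rightarrow> complex"
  assumes "i < d"
  shows "poly (pderiv (\<Prod>j<d. [:-r j,1:])) (r i) = (\<Prod>j\<in>{..<d}-{i}. (r i - r j))"
proof -
  have "poly (pderiv (\<Prod>j<d. [:-r j,1:])) (r i) = (\<Sum>a<d. \<Prod>j\<in>{..<d}-{a}. (r i - r j))"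
    by (simp add: pderiv_prod poly_sum poly_prod pderiv_pCons)
  also have "\<dots> = (\<Prod>j\<in>{..<d}-{i}. (r i - r j))"
  proof (subst sum.remove[of _ i])
    show "finite {..<d}" by simp
    show "i \<in> {..<d}" using assms by simp
    have "(\<Sum>a\<in>{..<d} - {i}. \<Prod>j\<in>{..<d}-{a}. (r i - r j)) = 0"
    proof (rule sum.neutral, rule ballI)
      fix a assume "a \<in> {..<d} - {i}"
      then have "i \<in> {..<d}-{a}" using assms by auto
      then show "(\<Prod>j\<in>{..<d}-{a}. (r i - r j)) = 0"
        by (intro prod_zero) auto
    qed
    then show "(\<Prod>j\<in>{..<d} - {i}. r i - r j) + (\<Sum>a\<in>{..<d} - {i}. \<Prod>j\<in>{..<d} - {a}. r i - r j) =
    (\<Prod>j\<in>{..<d} - {i}. r i - r j)" by simp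
  qed
  finally show ?thesis .
qed

lemma prod_offdiag:
  fixes f :: "nat \<Rightarrow> nat \<Rightarrow> 'a::comm_monoid_mult"
  shows "(\<Prod>i<d. \<Prod>j\<in>{..<d}-{i}. f i j) = (\<Prod>j<d. \<Prod>i<j. f i j * f j i)"
proof (induction d)
  case 0 then show ?case by simp
next
  case (Suc d)
  have e: "\<And>i. i < d \<Longrightarrow> {..<Suc d} - {i} = insert d ({..<d}-{i})" by auto
  have "(\<Prod>i<Suc d. \<Prod>j\<in>{..<Suc d}-{i}. f i j)
      = (\<Prod>i<d. \<Prod>j\<in>{..<Suc d}-{i}. f i j) * (\<Prod>j\<in>{..<Suc d}-{d}. f d j)"
    by simp
  also have "(\<Prod>j\<in>{..<Suc d}-{d}. f d j) = (\<Prod>j<d. f d j)"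
    by (rule prod.cong) auto
  also have "(\<Prod>i<d. \<Prod>j\<in>{..<Suc d}-{i}. f i j) = (\<Prod>i<d. f i d * (\<Prod>j\<in>{..<d}-{i}. f i j))"
    by (rule prod.cong, simp, subst e, auto)
  also have "\<dots> = (\<Prod>i<d. f i d) * (\<Prod>i<d. \<Prod>j\<in>{..<d}-{i}. f i j)"
    by (simp add: prod.distrib)
  finally show ?case using Suc by (simp add: prod.distrib mult_ac)
qed

lemma prod_neg_pow: "(\<Prod>j<2*n. (-1::complex)^j) = (-1)^n"
proof (induction n)
  case (Suc n)
  have "2 * Suc n = Suc (Suc (2*n))" by simp
  then show ?case using Suc by (simp add: power_add power_mult)
qed simp

theorem proposition2p1:
  fixes n :: nat and q :: complex
  assumes "n \<ge> 1"
  shows "discriminant (K_poly n q) =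
           of_nat n ^ (2 * n) * q ^ (2 * n - 1) * (q + 2 ^ (2 * n))"
proof -
  define p where "p = K_poly n q"
  have dpow: "degree ([:1,1:] ^ (2*n) :: complex poly) = 2*n"
    by (simp add: degree_power_eq)
  have dmon: "degree (monom q n) < 2*n" using assms degree_monom_le[of q n] by linarith
  have degp: "degree p = 2*n"
    unfolding p_def K_poly_def using dpow dmon by (simp add: degree_add_eq_left)
  have c1: "coeff ([:1,1:] ^ (2*n) :: complex poly) (2*n) = 1"
    using dpow lead_coeff_power[of "[:1,1::complex:]" "2*n"] by simp
  have lcp: "lead_coeff p = 1"
    unfolding degp unfolding p_def K_poly_def using assms c1
    by (simp add: coeff_monom)
  have pnz: "p \<noteq> 0" using lcp by auto
  define rs where "rs = (SOME rs. mset rs = proots p)"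
  have rs: "mset rs = proots p" unfolding rs_def by (rule someI_ex) (rule ex_mset)
  have len: "length rs = 2*n"
    using rs size_proots_complex[of p] degp by (metis size_mset)
  define r where "r = (\<lambda>i. rs ! i)"
  have "p = smult (lead_coeff p) (\<Prod>x\<in>#proots p. [:-x, 1:])"
    by (rule complex_poly_decompose_multiset [symmetric])
  also have "(\<Prod>x\<in>#proots p. [:-x, 1:]) = (\<Prod>x\<leftarrow>rs. [:-x, 1:])"
    by (subst prod_mset_prod_list [symmetric]) (simp add: rs)
  also have "\<dots> = (\<Prod>i<length rs. [:-rs ! i, 1:])"
    by (subst prod.list_conv_set_nth) (auto simp: atLeast0LessThan)
  finally have pdec: "p = (\<Prod>i<2*n. [:-r i, 1:])" using lcp len r_def by simp
  have peval: "\<And>x. poly p x = (\<Prod>i<2*n. (x - r i))"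
    by (subst pdec) (simp add: poly_prod)
  have pK: "\<And>x. poly p x = (1+x)^(2*n) + q * x^n"
    unfolding p_def K_poly_def by (simp add: poly_monom add.commute)
  have dK: "\<And>x. poly (pderiv p) x = of_nat (2*n) * (1+x)^(2*n-1) + of_nat n * q * x^(n-1)"
    unfolding p_def K_poly_def
    by (simp add: pderiv_add pderiv_power pderiv_monom poly_monom pderiv_pCons add.commute)
  have roots0: "\<And>i. i < 2*n \<Longrightarrow> poly p (r i) = 0"
    unfolding peval by (rule prod_zero) auto
  have D: "discriminant p = (\<Prod>j<2*n. \<Prod>i<j. (r i - r j) ^ 2)"
    unfolding discriminant_def Let_def rs_def[symmetric] lcp len r_def by simp
  define PP where "PP = (\<Prod>i<2*n. poly (pderiv p) (r i))"
  have "PP = (\<Prod>i<2*n. \<Prod>j\<in>{..<2*n}-{i}. (r i - r j))"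
    unfolding PP_def by (rule prod.cong, simp, subst pdec, rule pderiv_roots, simp)
  also have "\<dots> = (\<Prod>j<2*n. \<Prod>i<j. (r i - r j) * (r j - r i))"
    by (rule prod_offdiag)
  also have "\<dots> = (\<Prod>j<2*n. (-1)^j * (\<Prod>i<j. (r i - r j)^2))"
  proof (rule prod.cong, simp)
    fix j
    have "(\<Prod>i<j. (r i - r j) * (r j - r i)) = (\<Prod>i<j. (-1) * (r i - r j)^2)"
      by (rule prod.cong) (auto simp: power2_eq_square algebra_simps)
    then show "(\<Prod>i<j. (r i - r j) * (r j - r i)) = (-1)^j * (\<Prod>i<j. (r i - r j)^2)"
      by (simp only: prod.distrib prod_constant card_lessThan)
  qed
  also have "\<dots> = (-1)^n * discriminant p"
    by (simp add: prod.distrib prod_neg_pow D)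
  finally have PPD: "PP = (-1)^n * discriminant p" .
  obtain m where nm: "n = Suc m" using assms by (cases n) auto
  have key: "r i * (1 + r i) * poly (pderiv p) (r i) = of_nat n * q * r i ^ n * (1 - r i)"
    if "i < 2*n" for i
  proof -
    define x where "x = r i"
    define y where "y = (1+x)^(2*m+1)"
    have h: "(1+x)^(2*n) + q * x^n = 0" using roots0[OF that] pK x_def by simp
    have e: "(1+x)^(2*n) = (1+x)*y" unfolding y_def nm by simp
    have e2: "x^n = x*x^m" unfolding nm by simp
    have "(1+x)*y + q*(x*x^m) = 0" using h unfolding e e2 .
    then have h': "(1+x)*y = - q*x*x^m" by (simp add: eq_neg_iff_add_eq_0 mult.assoc)
    have "x * (1 + x) * poly (pderiv p) x = of_nat(2*(m+1))*x*((1+x)*y) + of_nat (m+1)*q*x*x^m*(1+x)"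
      unfolding dK y_def nm by (simp add: algebra_simps)
    also have "\<dots> = of_nat(2*(m+1))*x*(- q*x*x^m) + of_nat (m+1)*q*x*x^m*(1+x)"
      using h' by simp
    also have "\<dots> = of_nat n * q * x ^ n * (1 - x)"
      unfolding nm by (simp add: algebra_simps)
    finally show ?thesis unfolding x_def .
  qed
  have PR: "(\<Prod>i<2*n. r i * (1 + r i) * poly (pderiv p) (r i)) = (\<Prod>i<2*n. of_nat n * q * r i ^ n * (1 - r i))"
    by (rule prod.cong) (auto simp: key)
  have pr0: "(\<Prod>i<2*n. r i) = 1"
  proof -
    have "1 = poly p 0" using pK assms by simp
    also have "\<dots> = (\<Prod>i<2*n. (-1) * r i)" unfolding peval by simp
    also have "\<dots> = (\<Prod>i<2*n. r i)"
      by (simp only: prod.distrib prod_constant card_lessThan) (simp add: power_mult)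
    finally show ?thesis by simp
  qed
  have pr1: "(\<Prod>i<2*n. 1 + r i) = q * (-1)^n"
  proof -
    have "q * (-1)^n = poly p (-1)" using pK assms by simp
    also have "\<dots> = (\<Prod>i<2*n. (-1) * (1 + r i))" unfolding peval by (simp add: algebra_simps)
    also have "\<dots> = (\<Prod>i<2*n. 1 + r i)"
      by (simp only: prod.distrib prod_constant card_lessThan) (simp add: power_mult)
    finally show ?thesis by simp
  qed
  have pr2: "(\<Prod>i<2*n. 1 - r i) = 2^(2*n) + q"
    using pK[of 1] peval[of 1] by simp
  have eqPP: "q * (-1)^n * PP = of_nat n ^ (2*n) * q ^ (2*n) * (2^(2*n) + q)"
  proof -
    have "q * (-1)^n * PP = (\<Prod>i<2*n. r i * (1 + r i) * poly (pderiv p) (r i))"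
      unfolding PP_def prod.distrib pr0 pr1 by simp
    also have "\<dots> = (\<Prod>i<2*n. of_nat n * q * r i ^ n * (1 - r i))" by (rule PR)
    also have "\<dots> = of_nat n ^ (2*n) * q ^ (2*n) * (2^(2*n) + q)"
      by (simp only: prod.distrib prod_constant card_lessThan pr2) (simp add: prod_power_distrib[symmetric] pr0)
    finally show ?thesis .
  qed
  have main: "q * discriminant p = of_nat n ^ (2*n) * q ^ (2*n) * (2^(2*n) + q)" if that: "q * (-1)^n * PP = of_nat n ^ (2*n) * q ^ (2*n) * (2^(2*n) + q)"
  proof -
    have s: "(-1::complex)^n * (-1)^n = 1" by (simp add: power_add[symmetric] power_mult[symmetric] mult_2[symmetric] power_mult)
    have "q * discriminant p = q * (-1)^n * PP" unfolding PPD using s by (simp add: mult_ac)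
    then show ?thesis using that by simp
  qed
  note main = main[OF eqPP]
  show ?thesis
  proof (cases "q = 0")
    case False
    have "q ^ (2*n) = q * q^(2*n-1)" using assms by (simp add: power_Suc[symmetric])
    then show ?thesis using main False unfolding p_def by (simp add: mult_ac add.commute)
  next
    case True
    have "poly p (r 0) = 0" using roots0 assms by simp
    then have "r 0 = -1" using pK True by (simp add: add_eq_0_iff2 minus_equation_iff)
    then have "poly (pderiv p) (r 0) = 0" using dK True assms by simp
    then have "PP = 0" unfolding PP_def using assms by (intro prod_zero) auto
    then show ?thesis using PPD True assms unfolding p_def by simp
  qed
qed
end
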